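(* Let $\underline c=(c_1,\dots,c_k)$ and $\underline d=(d_1,\dots,d_k)$ be lists of positive integers. Arrange them in the array whose top row is $d_1,\dots,d_k$ (positions $1,\dots,k$) and whose bottom row is $1,c_1,\dots,c_k$ (positions $0,1,\dots,k$). An allowable path is a path in this array starting at the entry $1$ in which each step is a right move (same row, position $+1$), an up-right move (from bottom row position $j$ to top row position $j+1$), or a down move (from top row position $j$ to bottom row position $j$); its associated integer is the product of all entries encountered along the path. Let $E$ be the set of integers associated to allowable paths ending at $c_k$ and $F$ the set of integers associated to allowable paths ending at $d_k$. Then \[Y_{\underline c,\underline d}=\frac{\gcd(E)}{\gcd(E\cup F)}.\]
   Context: For positive integers $x,y$, $(x,y)$ denotes the gcd and $x\colon y=x/(x,y)$. For lists $\underline c=(c_1,\dots,c_k)$, $\underline d=(d_1,\dots,d_k)$ of positive integers define recursively $Y_0=1$ and $Y_j=\big((c_jY_{j-1})\colon d_j,\ c_j\big)$ (a gcd) for $1\le j\le k$, and set $Y_{\underline c,\underline d}=Y_k$. *)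

theory Defs
  imports Complex_Main
begin

definition colon :: "nat \<Rightarrow> nat \<Rightarrow> nat" where
  "colon x y = x div gcd x y"

definition Ycd :: "nat list \<Rightarrow> nat list \<Rightarrow> nat" where
  "Ycd cs ds = foldl (\<lambda>y (cj, dj). gcd (colon (cj * y) dj) cj) 1 (zip cs ds)"

(* Array positions: (True, j) = top row position j (entry d_j, 1 <= j <= k);
   (False, j) = bottom row position j (entry 1 for j = 0, c_j for 1 <= j <= k). *)
type_synonym pos = "bool \<times> nat"

definition valid_pos :: "nat \<Rightarrow> pos \<Rightarrow> bool" where
  "valid_pos k p = (if fst p then 1 \<le> snd p \<and> snd p \<le> k else snd p \<le> k)"

definition entry :: "nat list \<Rightarrow> nat list \<Rightarrow> pos \<Rightarrow> nat" where
  "entry cs ds p = (if fst p then ds ! (snd p - 1)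
                    else if snd p = 0 then 1 else cs ! (snd p - 1))"

definition path_step :: "pos \<Rightarrow> pos \<Rightarrow> bool" where
  "path_step p q =
     ((fst q = fst p \<and> snd q = snd p + 1)
      \<or> (\<not> fst p \<and> fst q \<and> snd q = snd p + 1)
      \<or> (fst p \<and> \<not> fst q \<and> snd q = snd p))"

definition allowable_path :: "nat \<Rightarrow> pos list \<Rightarrow> bool" where
  "allowable_path k ps =
     (ps \<noteq> [] \<and> hd ps = (False, 0) \<and> (\<forall>p\<in>set ps. valid_pos k p)
      \<and> successively path_step ps)"

definition path_int :: "nat list \<Rightarrow> nat list \<Rightarrow> pos list \<Rightarrow> nat" where
  "path_int cs ds ps = prod_list (map (entry cs ds) ps)"

definition Eset :: "nat list \<Rightarrow> nat list \<Rightarrow> nat set" where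
  "Eset cs ds = {path_int cs ds ps | ps. allowable_path (length cs) ps
                                        \<and> last ps = (False, length cs)}"

definition Fset :: "nat list \<Rightarrow> nat list \<Rightarrow> nat set" where
  "Fset cs ds = {path_int cs ds ps | ps. allowable_path (length cs) ps
                                        \<and> last ps = (True, length cs)}"

end

theory Submission
  imports Defs
begin

lemma Gcd_Un_nat: "Gcd ((A::nat set) \<union> B) = gcd (Gcd A) (Gcd B)"
proof (rule dvd_antisym)
  show "Gcd (A \<union> B) dvd gcd (Gcd A) (Gcd B)"
    by (intro gcd_greatest Gcd_greatest) (auto intro: Gcd_dvd)
  show "gcd (Gcd A) (Gcd B) dvd Gcd (A \<union> B)"
    by (intro Gcd_greatest) (auto intro: dvd_trans[OF gcd_dvd1 Gcd_dvd] dvd_trans[OF gcd_dvd2 Gcd_dvd])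
qed

lemma Gcd_times_nat: "Gcd ((\<lambda>x. x * (c::nat)) ` A) = c * Gcd A"
proof -
  have "(\<lambda>x. x * c) ` A = (*) c ` A" by (auto simp: mult.commute)
  then show ?thesis using Gcd_mult[of c A] by simp
qed

definition paths :: "nat \<Rightarrow> bool \<Rightarrow> nat \<Rightarrow> pos list set" where
  "paths k b j = {ps. allowable_path k ps \<and> last ps = (b, j)}"

lemma allow_snoc:
  "allowable_path k (ps @ [q]) \<longleftrightarrow>
     (if ps = [] then q = (False,0) \<and> valid_pos k q
      else allowable_path k ps \<and> valid_pos k q \<and> path_step (last ps) q)"
  by (auto simp: allowable_path_def successively_append_iff)

lemma paths_F0: "paths k False 0 = {[(False,0)]}"
proof
  show "paths k False 0 \<subseteq> {[(False,0)]}"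
  proof
    fix ps assume a: "ps \<in> paths k False 0"
    then have ne: "ps \<noteq> []" by (auto simp: paths_def allowable_path_def)
    then obtain ps' q where ps: "ps = ps' @ [q]" by (metis rev_exhaust)
    have q: "q = (False,0)" using a ps by (auto simp: paths_def)
    have "ps' = []"
    proof (rule ccontr)
      assume "ps' \<noteq> []"
      moreover have "allowable_path k (ps' @ [q])" using a ps by (auto simp: paths_def)
      ultimately have "allowable_path k ps'" "path_step (last ps') q"
        by (simp_all add: allow_snoc)
      moreover have "valid_pos k (last ps')" using \<open>ps' \<noteq> []\<close> \<open>allowable_path k ps'\<close>
        by (auto simp: allowable_path_def dest!: last_in_set)
      ultimately show False using q
        by (cases "last ps'") (auto simp: path_step_def valid_pos_def)
    qed
    then show "ps \<in> {[(False,0)]}" using ps q by simp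
  qed
    show "{[(False,0)]} \<subseteq> paths k False 0"
    by (auto simp: paths_def allowable_path_def valid_pos_def)
qed

lemma paths_T0: "paths k True 0 = {}"
proof -
  have False if "ps \<in> paths k True 0" for ps
  proof -
    have "ps \<noteq> []" "\<forall>p\<in>set ps. valid_pos k p" "last ps = (True,0)"
      using that by (auto simp: paths_def allowable_path_def)
    then show False using last_in_set[of ps] by (auto simp: valid_pos_def)
  qed
  then show ?thesis by blast
qed

lemma paths_snoc:
  assumes "j < k"
    and pred: "\<And>p. valid_pos k p \<Longrightarrow> path_step p (b, Suc j) \<longleftrightarrow> p \<in> P"
  shows "paths k b (Suc j) = (\<lambda>ps. ps @ [(b, Suc j)]) ` (\<Union>p\<in>P. paths k (fst p) (snd p))"
proof
  show "paths k b (Suc j) \<subseteq> (\<lambda>ps. ps @ [(b, Suc j)]) ` (\<Union>p\<in>P. paths k (fst p) (snd p))"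
  proof
    fix ps assume a: "ps \<in> paths k b (Suc j)"
    then have ne: "ps \<noteq> []" by (auto simp: paths_def allowable_path_def)
    then obtain ps' q where ps: "ps = ps' @ [q]" by (metis rev_exhaust)
    have q: "q = (b, Suc j)" using a ps by (auto simp: paths_def)
    have ne': "ps' \<noteq> []" using a ps q by (auto simp: paths_def allow_snoc)
    moreover have "allowable_path k (ps' @ [q])" using a ps by (auto simp: paths_def)
    ultimately have al: "allowable_path k ps'" "path_step (last ps') q"
      by (simp_all add: allow_snoc)
    have "valid_pos k (last ps')" using ne' al
      by (auto simp: allowable_path_def dest!: last_in_set)
    then have "last ps' \<in> P" using pred q al by simp
    moreover have "ps' \<in> paths k (fst (last ps')) (snd (last ps'))"
      using al by (simp add: paths_def)
    ultimately show "ps \<in> (\<lambda>ps. ps @ [(b, Suc j)]) ` (\<Union>p\<in>P. paths k (fst p) (snd p))"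
      using ps q by blast
  qed
  show "(\<lambda>ps. ps @ [(b, Suc j)]) ` (\<Union>p\<in>P. paths k (fst p) (snd p)) \<subseteq> paths k b (Suc j)"
  proof
    fix x assume "x \<in> (\<lambda>ps. ps @ [(b, Suc j)]) ` (\<Union>p\<in>P. paths k (fst p) (snd p))"
    then obtain ps p where x: "x = ps @ [(b, Suc j)]" and p: "p \<in> P"
      and ps: "ps \<in> paths k (fst p) (snd p)" by blast
    have al: "allowable_path k ps" and l: "last ps = p" using ps by (auto simp: paths_def)
    have ne: "ps \<noteq> []" using al by (simp add: allowable_path_def)
    have vp: "valid_pos k p" using al l ne by (auto simp: allowable_path_def dest!: last_in_set)
    have "path_step p (b, Suc j)" using pred[OF vp] p by simp
    moreover have "valid_pos k (b, Suc j)" using assms(1) by (auto simp: valid_pos_def)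
    ultimately show "x \<in> paths k b (Suc j)" using x al l ne by (simp add: paths_def allow_snoc)
  qed
qed

lemma paths_FS: "j < k \<Longrightarrow> paths k False (Suc j) =
   (\<lambda>ps. ps @ [(False, Suc j)]) ` (paths k False j \<union> paths k True (Suc j))"
proof -
  assume jk: "j < k"
  have "paths k False (Suc j) = (\<lambda>ps. ps @ [(False, Suc j)]) ` (\<Union>p\<in>{(False,j),(True,Suc j)}. paths k (fst p) (snd p))"
    by (rule paths_snoc[OF jk]) (auto simp: path_step_def valid_pos_def)
  then show ?thesis by simp
qed

lemma paths_TS: "j < k \<Longrightarrow> paths k True (Suc j) =
   (\<lambda>ps. ps @ [(True, Suc j)]) ` (paths k True j \<union> paths k False j)"
proof -
  assume jk: "j < k"
  have "paths k True (Suc j) = (\<lambda>ps. ps @ [(True, Suc j)]) ` (\<Union>p\<in>{(True,j),(False,j)}. paths k (fst p) (snd p))"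
    by (rule paths_snoc[OF jk]) (auto simp: path_step_def valid_pos_def)
  then show ?thesis by simp
qed

lemma gm: "gcd ((x::nat)*g) (y*g) = gcd x y * g"
proof -
  have "g * gcd x y = gcd (g*x) (g*y)" by (rule gcd_mult_distrib_nat)
  then show ?thesis by (simp only: mult.commute)
qed
lemma l2: "gcd ((c::nat) * gcd Y d) d = gcd (c*Y) d"
proof -
  have "c * gcd Y d = gcd (c*Y) (c*d)" by (rule gcd_mult_distrib_nat)
  then have "gcd (c * gcd Y d) d = gcd (c*Y) (gcd (c*d) d)" by (simp only: gcd.assoc)
  also have "gcd (c*d) d = d" by (rule gcd_nat.absorb2) simp
  finally show ?thesis .
qed
lemma l3: "gcd (Y::nat) (gcd (c*Y) d) = gcd Y d"
proof -
  have "gcd Y (gcd (c*Y) d) = gcd (gcd Y (c*Y)) d" by (simp only: gcd.assoc)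
  also have "gcd Y (c*Y) = Y" by (rule gcd_nat.absorb1) simp
  finally show ?thesis .
qed

lemma core:
  fixes Y g e c d :: nat
  assumes "Y * g = e" "e > 0" "c > 0"
  shows "gcd (colon (c*Y) d) c * gcd (c * gcd e (d*g)) (d*g) = c * gcd e (d*g)
         \<and> c * gcd e (d*g) > 0"
proof -
  define h where "h = gcd Y d"
  define u where "u = gcd (c*Y) d"
  have g0: "g > 0" "Y > 0" using assms by auto
  have e1: "gcd e (d*g) = h * g" unfolding h_def using assms(1) gm[of Y g d] by simp
  have e2: "gcd (c * (h*g)) (d*g) = u * g"
  proof -
    have "gcd (c * (h*g)) (d*g) = gcd ((c*h)*g) (d*g)" by (simp only: mult.assoc)
    also have "\<dots> = gcd (c*h) d * g" by (rule gm)
    also have "gcd (c*h) d = u" unfolding h_def u_def by (rule l2)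
    finally show ?thesis .
  qed
  have ud: "u dvd c*Y" by (simp add: u_def)
  have "gcd (c*Y div u) c * u = gcd (c*Y div u * u) (c*u)" by (rule gm[symmetric])
  also have "c*Y div u * u = c*Y" using ud by simp
  also have "gcd (c*Y) (c*u) = c * gcd Y u" by (rule gcd_mult_distrib_nat[symmetric])
  also have "gcd Y u = h" unfolding h_def u_def by (rule l3)
  finally have k: "gcd (c*Y div u) c * u = c * h" .
  have "gcd (colon (c*Y) d) c * gcd (c * gcd e (d*g)) (d*g) = gcd (c*Y div u) c * (u * g)"
    unfolding colon_def e1 e2 u_def by simp
  also have "\<dots> = (gcd (c*Y div u) c * u) * g" by (rule mult.assoc[symmetric])
  also have "\<dots> = c*h*g" by (simp only: k)
  also have "\<dots> = c * gcd e (d*g)" by (simp only: e1 mult.assoc)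
  finally have A: "gcd (colon (c*Y) d) c * gcd (c * gcd e (d*g)) (d*g) = c * gcd e (d*g)" .
  have "h > 0" using g0 unfolding h_def by simp
  then have "c * gcd e (d*g) > 0" unfolding e1 using g0 assms(3) by simp
  with A show ?thesis by blast
qed

fun ef :: "nat list \<Rightarrow> nat list \<Rightarrow> nat \<Rightarrow> nat \<times> nat" where
  "ef cs ds 0 = (1, 0)"
| "ef cs ds (Suc j) = (let e = fst (ef cs ds j); f = snd (ef cs ds j); f' = ds!j * gcd e f
                       in (cs!j * gcd e f', f'))"

definition Yf :: "nat list \<Rightarrow> nat list \<Rightarrow> nat \<Rightarrow> nat" where
  "Yf cs ds j = foldl (\<lambda>y (cj, dj). gcd (colon (cj * y) dj) cj) 1 (zip (take j cs) (take j ds))"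

lemma Yf_Suc:
  assumes "j < length cs" "length cs = length ds"
  shows "Yf cs ds (Suc j) = gcd (colon (cs!j * Yf cs ds j) (ds!j)) (cs!j)"
proof -
  have "j < length ds" using assms by simp
  then show ?thesis using assms(1)
    by (simp add: Yf_def take_Suc_conv_app_nth zip_append)
qed

lemma ef_Suc: "ef cs ds j = (e, f) \<Longrightarrow> ef cs ds (Suc j) = (cs!j * gcd e (ds!j * gcd e f), ds!j * gcd e f)"
  by (simp add: Let_def)

lemma inv_ef:
  assumes "length cs = length ds" "\<forall>x\<in>set cs. x > 0"
  shows "j \<le> length cs \<Longrightarrow> Yf cs ds j * gcd (fst (ef cs ds j)) (snd (ef cs ds j)) = fst (ef cs ds j)
          \<and> fst (ef cs ds j) > 0"
proof (induction j)
  case 0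
  then show ?case by (simp add: Yf_def)
next
  case (Suc j)
  then have jl: "j < length cs" by simp
  obtain e f where ef: "ef cs ds j = (e, f)" by (cases "ef cs ds j")
  have IH: "Yf cs ds j * gcd e f = e" "e > 0" using Suc ef by auto
  have c0: "cs!j > 0" using assms(2) jl nth_mem by blast
  have "gcd (colon (cs!j * Yf cs ds j) (ds!j)) (cs!j) *
        gcd (cs!j * gcd e (ds!j * gcd e f)) (ds!j * gcd e f)
      = cs!j * gcd e (ds!j * gcd e f) \<and> cs!j * gcd e (ds!j * gcd e f) > 0"
    by (rule core[OF IH c0])
  then show ?case unfolding ef_Suc[OF ef] Yf_Suc[OF jl assms(1)] fst_conv snd_conv .
qed

lemma pi_snoc: "path_int cs ds (ps @ [q]) = path_int cs ds ps * entry cs ds q"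
  by (simp add: path_int_def)

lemma img_snoc: "path_int cs ds ` ((\<lambda>ps. ps @ [q]) ` A) = (\<lambda>x. x * entry cs ds q) ` (path_int cs ds ` A)"
  by (simp add: image_image pi_snoc)

lemma gcds_ef:
  "j \<le> length cs \<Longrightarrow> Gcd (path_int cs ds ` paths (length cs) False j) = fst (ef cs ds j)
     \<and> Gcd (path_int cs ds ` paths (length cs) True j) = snd (ef cs ds j)"
proof (induction j)
  case 0
  then show ?case by (simp add: paths_F0 paths_T0 path_int_def entry_def)
next
  case (Suc j)
  then have jl: "j < length cs" by simp
  let ?S = "\<lambda>b j. path_int cs ds ` paths (length cs) b j"
  have IH: "Gcd (?S False j) = fst (ef cs ds j)" "Gcd (?S True j) = snd (ef cs ds j)"
    using Suc by auto
  have T: "Gcd (?S True (Suc j)) = ds!j * gcd (fst (ef cs ds j)) (snd (ef cs ds j))"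
    unfolding paths_TS[OF jl] img_snoc image_Un Gcd_times_nat Gcd_Un_nat IH
    by (simp add: entry_def gcd.commute) (rule gcd_mult_distrib_nat[symmetric])
  have F: "Gcd (?S False (Suc j)) = cs!j * gcd (fst (ef cs ds j)) (Gcd (?S True (Suc j)))"
    unfolding paths_FS[OF jl] img_snoc image_Un Gcd_times_nat Gcd_Un_nat IH
    by (simp add: entry_def) (rule gcd_mult_distrib_nat[symmetric])
  obtain e f where ef: "ef cs ds j = (e, f)" by (cases "ef cs ds j")
  show ?case using T F unfolding ef_Suc[OF ef] ef fst_conv snd_conv by simp
qed

theorem proposition7p14:
  fixes cs ds :: "nat list"
  assumes "length cs = length ds" and "length cs \<ge> 1"
    and "\<forall>x\<in>set cs. x > 0" and "\<forall>x\<in>set ds. x > 0"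
  shows "real (Ycd cs ds) = real (Gcd (Eset cs ds)) / real (Gcd (Eset cs ds \<union> Fset cs ds))"
proof -
  let ?k = "length cs"
  have E: "Eset cs ds = path_int cs ds ` paths ?k False ?k"
    by (auto simp: Eset_def paths_def)
  have F: "Fset cs ds = path_int cs ds ` paths ?k True ?k"
    by (auto simp: Fset_def paths_def)
  have Y: "Ycd cs ds = Yf cs ds ?k" using assms(1) by (simp add: Ycd_def Yf_def)
  obtain e f where ef: "ef cs ds ?k = (e, f)" by (cases "ef cs ds ?k")
  have G: "Gcd (Eset cs ds) = e" "Gcd (Eset cs ds \<union> Fset cs ds) = gcd e f"
    using gcds_ef[of ?k cs ds] ef unfolding E F Gcd_Un_nat by auto
  have I: "Ycd cs ds * gcd e f = e" "e > 0"
    using inv_ef[OF assms(1) assms(3), of ?k] ef Y by auto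
  then have "gcd e f > 0" by (metis gr0I mult_0_right)
  then have "real (Ycd cs ds) = real e / real (gcd e f)"
    using I(1) by (simp add: eq_divide_eq flip: of_nat_mult)
  then show ?thesis using G by simp
qed

end
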